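(* Let $A$ be a division ring and let $R=A[x]$ be the polynomial ring over $A$ in a central indeterminate $x$. If $R$ is right quasi-invariant, then $A$ is a field.
   Context: All rings are associative, unital and non-zero. A ring is right quasi-invariant if every maximal right ideal of it is a two-sided ideal. *)

theory Defs
  imports "HOL-Algebra.Ideal" "HOL-Algebra.UnivPoly"
begin

definition division_ring :: "('a, 'b) ring_scheme \<Rightarrow> bool" where
  "division_ring R \<longleftrightarrow> ring R \<and> \<one>\<^bsub>R\<^esub> \<noteq> \<zero>\<^bsub>R\<^esub> \<and> carrier R - {\<zero>\<^bsub>R\<^esub>} \<subseteq> Units R"

definition right_ideal :: "'a set \<Rightarrow> ('a, 'b) ring_scheme \<Rightarrow> bool" where
  "right_ideal I R \<longleftrightarrow> additive_subgroup I R \<and>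
     (\<forall>a\<in>I. \<forall>r\<in>carrier R. a \<otimes>\<^bsub>R\<^esub> r \<in> I)"

definition maximal_right_ideal :: "'a set \<Rightarrow> ('a, 'b) ring_scheme \<Rightarrow> bool" where
  "maximal_right_ideal I R \<longleftrightarrow> right_ideal I R \<and> I \<noteq> carrier R \<and>
     (\<forall>J. right_ideal J R \<and> I \<subseteq> J \<longrightarrow> J = I \<or> J = carrier R)"

definition right_quasi_invariant :: "('a, 'b) ring_scheme \<Rightarrow> bool" where
  "right_quasi_invariant R \<longleftrightarrow> (\<forall>I. maximal_right_ideal I R \<longrightarrow> ideal I R)"

end

theory Submission
  imports Defs
begin

context UP_ring
begin

definition ev :: "'a \<Rightarrow> (nat \<Rightarrow> 'a) \<Rightarrow> 'a" where
  "ev a f = (\<Oplus>i\<in>{..deg R f}. a [^] i \<otimes> coeff P f i)"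

lemma ev_closed: "a \<in> carrier R \<Longrightarrow> f \<in> carrier P \<Longrightarrow> ev a f \<in> carrier R"
  unfolding ev_def by (auto intro!: R.finsum_closed)

lemma ev_le:
  assumes a: "a \<in> carrier R" and f: "f \<in> carrier P" and n: "deg R f \<le> n"
  shows "ev a f = (\<Oplus>i\<in>{..n}. a [^] i \<otimes> coeff P f i)"
proof -
  let ?s = "\<lambda>i. a [^] i \<otimes> coeff P f i"
  have "finsum R ?s {..n} = finsum R ?s ({..deg R f} \<union> {deg R f<..n})"
    using n by (simp only: ivl_disj_un_one)
  also have "... = finsum R ?s {..deg R f}"
    using a f by (simp cong: R.finsum_cong add: R.finsum_Un_disjoint ivl_disj_int_one
      deg_aboveD Pi_def)
  finally show ?thesis unfolding ev_def by simp
qed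

lemma ev_add:
  assumes a: "a \<in> carrier R" and f: "f \<in> carrier P" and g: "g \<in> carrier P"
  shows "ev a (f \<oplus>\<^bsub>P\<^esub> g) = ev a f \<oplus> ev a g"
proof -
  let ?n = "max (deg R f) (deg R g)"
  have d: "deg R (f \<oplus>\<^bsub>P\<^esub> g) \<le> ?n" using deg_add f g by blast
  have "ev a (f \<oplus>\<^bsub>P\<^esub> g) = (\<Oplus>i\<in>{..?n}. a [^] i \<otimes> coeff P (f \<oplus>\<^bsub>P\<^esub> g) i)"
    using ev_le[OF a _ d] f g by simp
  also have "... = (\<Oplus>i\<in>{..?n}. a [^] i \<otimes> coeff P f i \<oplus> a [^] i \<otimes> coeff P g i)"
    using a f g by (intro R.finsum_cong) (auto simp: R.r_distr Pi_def)
  also have "... = (\<Oplus>i\<in>{..?n}. a [^] i \<otimes> coeff P f i) \<oplus> (\<Oplus>i\<in>{..?n}. a [^] i \<otimes> coeff P g i)"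
    using a f g by (intro R.finsum_addf) (auto simp: Pi_def)
  also have "... = ev a f \<oplus> ev a g"
    using ev_le[OF a f, of ?n] ev_le[OF a g, of ?n] by simp
  finally show ?thesis .
qed

lemma ev_zero: "ev a \<zero>\<^bsub>P\<^esub> = \<zero>"
  unfolding ev_def by simp

lemma ev_neg:
  assumes a: "a \<in> carrier R" and f: "f \<in> carrier P"
  shows "ev a (\<ominus>\<^bsub>P\<^esub> f) = \<ominus> ev a f"
proof -
  have "ev a f \<oplus> ev a (\<ominus>\<^bsub>P\<^esub> f) = \<zero>"
    using ev_add[OF a f, of "\<ominus>\<^bsub>P\<^esub> f"] f by (simp add: ev_zero P.r_neg)
  then have "ev a (\<ominus>\<^bsub>P\<^esub> f) \<oplus> ev a f = \<zero>"
    using ev_closed[OF a] f R.a_comm by (metis P.a_inv_closed)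
  then have "\<ominus> ev a f = ev a (\<ominus>\<^bsub>P\<^esub> f)"
    by (rule R.minus_equality) (use ev_closed[OF a] f in auto)
  then show ?thesis by simp
qed

lemma ev_monom:
  assumes a: "a \<in> carrier R" and c: "c \<in> carrier R"
  shows "ev a (monom P c n) = a [^] n \<otimes> c"
proof -
  have "ev a (monom P c n) = (\<Oplus>i\<in>{..n}. a [^] i \<otimes> coeff P (monom P c n) i)"
    using ev_le[OF a _ deg_monom_le[OF c]] c by simp
  also have "... = (\<Oplus>i\<in>{..n}. if n = i then a [^] i \<otimes> c else \<zero>)"
  proof (rule R.finsum_cong')
    fix i assume "i \<in> {..n}"
    show "a [^] i \<otimes> coeff P (monom P c n) i = (if n = i then a [^] i \<otimes> c else \<zero>)"
      using a c by simp
  qed (use a c in \<open>auto simp: Pi_def\<close>)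
  also have "... = a [^] n \<otimes> c"
    using a c by (subst R.finsum_singleton) (auto simp: Pi_def)
  finally show ?thesis .
qed

lemma coeff_mult_monom:
  assumes f: "f \<in> carrier P" and c: "c \<in> carrier R"
  shows "coeff P (f \<otimes>\<^bsub>P\<^esub> monom P c j) k = (if j \<le> k then coeff P f (k - j) \<otimes> c else \<zero>)"
proof (cases "j \<le> k")
  case True
  have "coeff P (f \<otimes>\<^bsub>P\<^esub> monom P c j) k = (\<Oplus>i\<in>{..k}. coeff P f i \<otimes> (if j = k - i then c else \<zero>))"
    using f c by simp
  also have "... = (\<Oplus>i\<in>{..k}. if k - j = i then coeff P f i \<otimes> c else \<zero>)"
  proof (rule R.finsum_cong')
    fix i assume i: "i \<in> {..k}"
    show "coeff P f i \<otimes> (if j = k - i then c else \<zero>) = (if k - j = i then coeff P f i \<otimes> c else \<zero>)"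
      using f c True i by auto
  qed (use f c in \<open>auto simp: Pi_def\<close>)
  also have "... = coeff P f (k - j) \<otimes> c"
    using f c by (subst R.finsum_singleton) (auto simp: Pi_def)
  finally show ?thesis using True by simp
next
  case False
  have "coeff P (f \<otimes>\<^bsub>P\<^esub> monom P c j) k = (\<Oplus>i\<in>{..k}. coeff P f i \<otimes> (if j = k - i then c else \<zero>))"
    using f c by simp
  also have "... = (\<Oplus>i\<in>{..k}. \<zero>)"
  proof (rule R.finsum_cong')
    fix i assume i: "i \<in> {..k}"
    show "coeff P f i \<otimes> (if j = k - i then c else \<zero>) = \<zero>"
      using f c False i by auto
  qed auto
  finally show ?thesis using False by simp
qed

lemma ev_mult_const:
  assumes a: "a \<in> carrier R" and f: "f \<in> carrier P" and c: "c \<in> carrier R"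
  shows "ev a (f \<otimes>\<^bsub>P\<^esub> monom P c 0) = ev a f \<otimes> c"
proof -
  have d: "deg R (f \<otimes>\<^bsub>P\<^esub> monom P c 0) \<le> deg R f"
    using deg_mult_ring[OF f monom_closed[OF c, of 0]] deg_monom_le[OF c, of 0] by simp
  have "ev a (f \<otimes>\<^bsub>P\<^esub> monom P c 0) = (\<Oplus>i\<in>{..deg R f}. a [^] i \<otimes> coeff P (f \<otimes>\<^bsub>P\<^esub> monom P c 0) i)"
    using ev_le[OF a _ d] f c by simp
  also have "... = (\<Oplus>i\<in>{..deg R f}. (a [^] i \<otimes> coeff P f i) \<otimes> c)"
  proof (rule R.finsum_cong')
    fix i assume "i \<in> {..deg R f}"
    show "a [^] i \<otimes> coeff P (f \<otimes>\<^bsub>P\<^esub> monom P c 0) i = (a [^] i \<otimes> coeff P f i) \<otimes> c"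
      using a c f by (simp add: coeff_mult_monom R.m_assoc del: coeff_mult)
  qed (use a c f in \<open>auto simp: Pi_def\<close>)
  also have "... = (\<Oplus>i\<in>{..deg R f}. a [^] i \<otimes> coeff P f i) \<otimes> c"
    using a c f by (subst R.finsum_ldistr) (auto simp: Pi_def)
  finally show ?thesis unfolding ev_def .
qed

lemma ev_mult_X:
  assumes a: "a \<in> carrier R" and f: "f \<in> carrier P"
  shows "ev a (f \<otimes>\<^bsub>P\<^esub> monom P \<one> 1) = a \<otimes> ev a f"
proof -
  have d: "deg R (f \<otimes>\<^bsub>P\<^esub> monom P \<one> 1) \<le> Suc (deg R f)"
    using deg_mult_ring[OF f monom_closed[OF R.one_closed, of 1]] deg_monom_le[OF R.one_closed, of 1] by simp
  have "ev a (f \<otimes>\<^bsub>P\<^esub> monom P \<one> 1) = (\<Oplus>i\<in>{..Suc (deg R f)}. a [^] i \<otimes> coeff P (f \<otimes>\<^bsub>P\<^esub> monom P \<one> 1) i)"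
    using ev_le[OF a _ d] f by simp
  also have "... = (\<Oplus>i\<in>{..deg R f}. a [^] Suc i \<otimes> coeff P (f \<otimes>\<^bsub>P\<^esub> monom P \<one> 1) (Suc i)) \<oplus> a [^] (0::nat) \<otimes> coeff P (f \<otimes>\<^bsub>P\<^esub> monom P \<one> 1) 0"
    using a f by (subst R.finsum_Suc2) (auto simp: Pi_def)
  also have "... = (\<Oplus>i\<in>{..deg R f}. a \<otimes> (a [^] i \<otimes> coeff P f i))"
  proof -
    have "(\<Oplus>i\<in>{..deg R f}. a [^] Suc i \<otimes> coeff P (f \<otimes>\<^bsub>P\<^esub> monom P \<one> 1) (Suc i)) = (\<Oplus>i\<in>{..deg R f}. a \<otimes> (a [^] i \<otimes> coeff P f i))"
    proof (rule R.finsum_cong')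
      fix i assume "i \<in> {..deg R f}"
      show "a [^] Suc i \<otimes> coeff P (f \<otimes>\<^bsub>P\<^esub> monom P \<one> 1) (Suc i) = a \<otimes> (a [^] i \<otimes> coeff P f i)"
      proof -
        have comm: "a [^] i \<otimes> a = a \<otimes> a [^] i" using R.nat_pow_Suc2[OF a, of i] by simp
        have "coeff P (f \<otimes>\<^bsub>P\<^esub> monom P \<one> 1) (Suc i) = coeff P f i"
          using f by (simp add: coeff_mult_monom del: coeff_mult)
        moreover have "(a [^] i \<otimes> a) \<otimes> coeff P f i = a \<otimes> (a [^] i \<otimes> coeff P f i)"
          unfolding comm using a f by (simp add: R.m_assoc)
        ultimately show ?thesis by simp
      qed
    qed (use a f in \<open>auto simp: Pi_def\<close>)
    moreover have "coeff P (f \<otimes>\<^bsub>P\<^esub> monom P \<one> 1) 0 = \<zero>"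
      using f by (simp add: coeff_mult_monom del: coeff_mult)
    ultimately show ?thesis using a f by (simp add: Pi_def R.finsum_closed)
  qed
  also have "... = a \<otimes> ev a f"
    unfolding ev_def using a f by (subst R.finsum_rdistr) (auto simp: Pi_def)
  finally show ?thesis .
qed

lemma ev_mult_monom_zero:
  assumes a: "a \<in> carrier R" and f: "f \<in> carrier P" and c: "c \<in> carrier R"
    and z: "ev a f = \<zero>"
  shows "ev a (f \<otimes>\<^bsub>P\<^esub> monom P c j) = \<zero>"
proof (induction j)
  case 0
  then show ?case using ev_mult_const[OF a f c] z c by simp
next
  case (Suc j)
  have "monom P c (Suc j) = monom P c j \<otimes>\<^bsub>P\<^esub> monom P \<one> 1"
    using monom_mult[OF c R.one_closed, of j 1] c by simp
  then have "f \<otimes>\<^bsub>P\<^esub> monom P c (Suc j) = (f \<otimes>\<^bsub>P\<^esub> monom P c j) \<otimes>\<^bsub>P\<^esub> monom P \<one> 1"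
    using f c by (simp add: P.m_assoc)
  then show ?case using ev_mult_X[OF a, of "f \<otimes>\<^bsub>P\<^esub> monom P c j"] Suc f c a by simp
qed

lemma ev_finsum:
  assumes a: "a \<in> carrier R" and fin: "finite A"
  shows "h \<in> A \<rightarrow> carrier P \<Longrightarrow> ev a (finsum P h A) = (\<Oplus>i\<in>A. ev a (h i))"
  using fin
proof (induction A rule: finite_induct)
  case empty
  then show ?case by (simp add: ev_zero)
next
  case (insert x F)
  then have hx: "h x \<in> carrier P" and hF: "h \<in> F \<rightarrow> carrier P" by auto
  have "finsum P h (insert x F) = h x \<oplus>\<^bsub>P\<^esub> finsum P h F"
    using insert hx hF by (simp add: P.finsum_insert)
  then have "ev a (finsum P h (insert x F)) = ev a (h x) \<oplus> ev a (finsum P h F)"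
    using ev_add[OF a hx P.finsum_closed[OF hF]] by simp
  also have "... = (\<Oplus>i\<in>insert x F. ev a (h i))"
    using insert hx hF a by (simp add: R.finsum_insert ev_closed Pi_def)
  finally show ?case .
qed

definition K :: "'a \<Rightarrow> (nat \<Rightarrow> 'a) set" where
  "K a = {f \<in> carrier P. ev a f = \<zero>}"

lemma K_subgroup:
  assumes a: "a \<in> carrier R"
  shows "subgroup (K a) (add_monoid P)"
proof (rule P.add.subgroupI, goal_cases)
  case 1 show ?case unfolding K_def by auto
next
  case 2 show ?case unfolding K_def using ev_zero by auto
next
  case (3 f)
  then show ?case
    unfolding K_def a_inv_def[symmetric] using ev_neg[OF a] by simp
next
  case (4 f g)
  then show ?case
    unfolding K_def using ev_add[OF a] by simp
qed

lemma K_right_closed: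
  assumes a: "a \<in> carrier R" and f: "f \<in> K a" and g: "g \<in> carrier P"
  shows "f \<otimes>\<^bsub>P\<^esub> g \<in> K a"
proof -
  have fc: "f \<in> carrier P" and z: "ev a f = \<zero>" using f unfolding K_def by auto
  have "f \<otimes>\<^bsub>P\<^esub> g = f \<otimes>\<^bsub>P\<^esub> (\<Oplus>\<^bsub>P\<^esub> i \<in> {..deg R g}. monom P (coeff P g i) i)"
    using up_repr[OF g] by simp
  also have "... = (\<Oplus>\<^bsub>P\<^esub> i \<in> {..deg R g}. f \<otimes>\<^bsub>P\<^esub> monom P (coeff P g i) i)"
    using fc g by (subst P.finsum_rdistr) (auto simp: Pi_def)
  finally have eq: "f \<otimes>\<^bsub>P\<^esub> g = (\<Oplus>\<^bsub>P\<^esub> i \<in> {..deg R g}. f \<otimes>\<^bsub>P\<^esub> monom P (coeff P g i) i)" .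
  have "ev a (f \<otimes>\<^bsub>P\<^esub> g) = (\<Oplus>i\<in>{..deg R g}. ev a (f \<otimes>\<^bsub>P\<^esub> monom P (coeff P g i) i))"
    unfolding eq using fc g by (subst ev_finsum[OF a]) (auto simp: Pi_def)
  also have "... = (\<Oplus>i\<in>{..deg R g}. \<zero>)"
    using ev_mult_monom_zero[OF a fc _ z] g by (intro R.finsum_cong') auto
  finally show ?thesis unfolding K_def using fc g by simp
qed

lemma K_maximal:
  assumes a: "a \<in> carrier R" and div: "carrier R - {\<zero>} \<subseteq> Units R" and nz: "\<one> \<noteq> \<zero>"
  shows "maximal_right_ideal (K a) P"
  unfolding maximal_right_ideal_def
proof (intro conjI allI impI)
  show rK: "right_ideal (K a) P"
    unfolding right_ideal_def
    using additive_subgroupI[OF K_subgroup[OF a]] K_right_closed[OF a] by blast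
  have "ev a \<one>\<^bsub>P\<^esub> = \<one>"
    using ev_monom[OF a R.one_closed, of 0] monom_one by simp
  then have "\<one>\<^bsub>P\<^esub> \<notin> K a" unfolding K_def using nz by simp
  then show "K a \<noteq> carrier P" by auto
next
  fix J assume "right_ideal J P \<and> K a \<subseteq> J"
  then have rJ: "right_ideal J P" and KJ: "K a \<subseteq> J" by auto
  have sg: "additive_subgroup J P" and rc: "\<And>x r. x \<in> J \<Longrightarrow> r \<in> carrier P \<Longrightarrow> x \<otimes>\<^bsub>P\<^esub> r \<in> J"
    using rJ unfolding right_ideal_def by auto
  have Jc: "J \<subseteq> carrier P" using additive_subgroup.a_subset[OF sg] .
  show "J = K a \<or> J = carrier P"
  proof (cases "J = K a")
    case False
    then obtain f where fJ: "f \<in> J" and fK: "f \<notin> K a" using KJ by blast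
    have fc: "f \<in> carrier P" using fJ Jc by blast
    define c where "c = ev a f"
    have cc: "c \<in> carrier R" unfolding c_def using ev_closed[OF a fc] .
    have cnz: "c \<noteq> \<zero>" using fK fc unfolding K_def c_def by simp
    have mc: "monom P c 0 \<in> carrier P" using cc by simp
    have "ev a (f \<oplus>\<^bsub>P\<^esub> \<ominus>\<^bsub>P\<^esub> monom P c 0) = c \<oplus> \<ominus> c"
      using ev_add[OF a fc P.a_inv_closed[OF mc]] ev_neg[OF a mc] ev_monom[OF a cc, of 0] cc
      unfolding c_def by simp
    then have "f \<oplus>\<^bsub>P\<^esub> \<ominus>\<^bsub>P\<^esub> monom P c 0 \<in> K a"
      unfolding K_def using fc mc cc by (simp add: R.r_neg)
    then have d: "f \<oplus>\<^bsub>P\<^esub> \<ominus>\<^bsub>P\<^esub> monom P c 0 \<in> J" using KJ by blast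
    have "monom P c 0 = \<ominus>\<^bsub>P\<^esub> (f \<oplus>\<^bsub>P\<^esub> \<ominus>\<^bsub>P\<^esub> monom P c 0) \<oplus>\<^bsub>P\<^esub> f"
      using fc mc by (simp add: P.minus_add P.a_ac P.r_neg1 P.r_neg2)
    also have "... \<in> J"
      using d fJ additive_subgroup.a_closed[OF sg] additive_subgroup.a_inv_closed[OF sg] by blast
    finally have mJ: "monom P c 0 \<in> J" .
    have cu: "c \<in> Units R" using div cc cnz by blast
    have "monom P c 0 \<otimes>\<^bsub>P\<^esub> monom P (inv c) 0 = monom P (c \<otimes> inv c) (0 + 0)"
      using monom_mult[OF cc R.Units_inv_closed[OF cu], of 0 0] by simp
    also have "... = \<one>\<^bsub>P\<^esub>" using cu by simp
    finally have oneJ: "\<one>\<^bsub>P\<^esub> \<in> J"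
      using rc[OF mJ, of "monom P (inv c) 0"] cu by simp
    have "carrier P \<subseteq> J"
    proof
      fix g assume "g \<in> carrier P"
      then show "g \<in> J" using rc[OF oneJ, of g] by simp
    qed
    then show ?thesis using Jc by blast
  qed simp
qed

end

theorem lemma2p1:
  fixes A :: "('a, 'b) ring_scheme"
  assumes "division_ring A"
    and "right_quasi_invariant (UP A)"
  shows "field A"
proof -
  have rA: "ring A" and nz: "\<one>\<^bsub>A\<^esub> \<noteq> \<zero>\<^bsub>A\<^esub>" and div: "carrier A - {\<zero>\<^bsub>A\<^esub>} \<subseteq> Units A"
    using assms(1) unfolding division_ring_def by auto
  interpret U: UP_ring A "UP A" using rA by (simp add: UP_ring_def)
  have comm: "x \<otimes>\<^bsub>A\<^esub> y = y \<otimes>\<^bsub>A\<^esub> x" if x: "x \<in> carrier A" and y: "y \<in> carrier A" for x y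
  proof -
    have id: "ideal (U.K x) (UP A)"
      using assms(2) U.K_maximal[OF x div nz] unfolding right_quasi_invariant_def by blast
    let ?X = "monom (UP A) \<one>\<^bsub>A\<^esub> 1"
    let ?c = "monom (UP A) x 0"
    let ?b = "monom (UP A) y 0"
    have Xc: "?X \<in> carrier (UP A)" and cc: "?c \<in> carrier (UP A)" and bc: "?b \<in> carrier (UP A)"
      using x y by auto
    have "U.ev x (?X \<oplus>\<^bsub>UP A\<^esub> \<ominus>\<^bsub>UP A\<^esub> ?c) = x \<otimes>\<^bsub>A\<^esub> \<one>\<^bsub>A\<^esub> \<oplus>\<^bsub>A\<^esub> \<ominus>\<^bsub>A\<^esub> x"
      using U.ev_add[OF x Xc U.a_inv_closed[OF cc]] U.ev_neg[OF x cc]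
        U.ev_monom[OF x U.R.one_closed, of 1] U.ev_monom[OF x x, of 0] x by simp
    then have "?X \<oplus>\<^bsub>UP A\<^esub> \<ominus>\<^bsub>UP A\<^esub> ?c \<in> U.K x"
      unfolding U.K_def using x Xc cc by (simp add: U.R.r_neg)
    then have "?b \<otimes>\<^bsub>UP A\<^esub> (?X \<oplus>\<^bsub>UP A\<^esub> \<ominus>\<^bsub>UP A\<^esub> ?c) \<in> U.K x"
      using ideal.I_l_closed[OF id] bc by blast
    moreover have "?b \<otimes>\<^bsub>UP A\<^esub> (?X \<oplus>\<^bsub>UP A\<^esub> \<ominus>\<^bsub>UP A\<^esub> ?c) =
        monom (UP A) y 1 \<oplus>\<^bsub>UP A\<^esub> \<ominus>\<^bsub>UP A\<^esub> monom (UP A) (y \<otimes>\<^bsub>A\<^esub> x) 0"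
    proof -
      have "?b \<otimes>\<^bsub>UP A\<^esub> (?X \<oplus>\<^bsub>UP A\<^esub> \<ominus>\<^bsub>UP A\<^esub> ?c) =
          ?b \<otimes>\<^bsub>UP A\<^esub> ?X \<oplus>\<^bsub>UP A\<^esub> \<ominus>\<^bsub>UP A\<^esub> (?b \<otimes>\<^bsub>UP A\<^esub> ?c)"
        using Xc cc bc by (simp add: U.r_distr U.r_minus)
      moreover have "?b \<otimes>\<^bsub>UP A\<^esub> ?X = monom (UP A) y 1"
        using U.monom_mult[OF y U.R.one_closed, of 0 1] y by simp
      moreover have "?b \<otimes>\<^bsub>UP A\<^esub> ?c = monom (UP A) (y \<otimes>\<^bsub>A\<^esub> x) 0"
        using U.monom_mult[OF y x, of 0 0] y by simp
      ultimately show ?thesis by simp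
    qed
    ultimately have "U.ev x (monom (UP A) y 1 \<oplus>\<^bsub>UP A\<^esub> \<ominus>\<^bsub>UP A\<^esub> monom (UP A) (y \<otimes>\<^bsub>A\<^esub> x) 0) = \<zero>\<^bsub>A\<^esub>"
      unfolding U.K_def by simp
    moreover have "U.ev x (monom (UP A) y 1 \<oplus>\<^bsub>UP A\<^esub> \<ominus>\<^bsub>UP A\<^esub> monom (UP A) (y \<otimes>\<^bsub>A\<^esub> x) 0)
        = x \<otimes>\<^bsub>A\<^esub> y \<oplus>\<^bsub>A\<^esub> \<ominus>\<^bsub>A\<^esub> (y \<otimes>\<^bsub>A\<^esub> x)"
    proof -
      have m1: "monom (UP A) y 1 \<in> carrier (UP A)" and m2: "monom (UP A) (y \<otimes>\<^bsub>A\<^esub> x) 0 \<in> carrier (UP A)"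
        using x y by auto
      show ?thesis
        using U.ev_add[OF x m1 U.a_inv_closed[OF m2]] U.ev_neg[OF x m2]
          U.ev_monom[OF x y, of 1] U.ev_monom[OF x U.R.m_closed[OF y x], of 0] x y by simp
    qed
    ultimately have "x \<otimes>\<^bsub>A\<^esub> y \<oplus>\<^bsub>A\<^esub> \<ominus>\<^bsub>A\<^esub> (y \<otimes>\<^bsub>A\<^esub> x) = \<zero>\<^bsub>A\<^esub>" by simp
    then show ?thesis using x y
      by (metis U.R.add.inv_closed U.R.m_closed U.R.minus_minus U.R.minus_equality U.R.add.m_comm)
  qed
  have cA: "cring A"
    by (intro cring.intro rA comm_monoid.intro U.R.is_monoid comm_monoid_axioms.intro) (use comm in auto)
  show ?thesis
  proof (rule cring.cring_fieldI[OF cA])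
    show "Units A = carrier A - {\<zero>\<^bsub>A\<^esub>}"
    proof
      show "Units A \<subseteq> carrier A - {\<zero>\<^bsub>A\<^esub>}"
      proof
        fix u assume u: "u \<in> Units A"
        have "u \<noteq> \<zero>\<^bsub>A\<^esub>"
        proof
          assume "u = \<zero>\<^bsub>A\<^esub>"
          then have "inv\<^bsub>A\<^esub> u \<otimes>\<^bsub>A\<^esub> u = \<zero>\<^bsub>A\<^esub>" using u by simp
          then show False using U.R.Units_l_inv[OF u] nz by simp
        qed
        then show "u \<in> carrier A - {\<zero>\<^bsub>A\<^esub>}" using u by (simp add: Units_def)
      qed
    qed (use div in auto)
  qed
qed

end
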